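(* Let $G$ be a connected graph with girth at least $5$, let $w\in V(G)$, and let $T$ be a breadth-first spanning tree of $G$ rooted at $w$, with vertex order $\sigma$. Let $\sigma'$ be a non-empty prefix of $\sigma$, let $\varphi'$ be a proper coloring of the subgraph induced by $\sigma'$, and let $\varphi$ be a greedy coloring of $G$ with respect to $\sigma$ and $\varphi'$. If $\varphi$ fixes each vertex of $\sigma'$, then $\varphi$ is a proper distinguishing coloring of $G$.
   Context: A coloring of $G$ is a map $\varphi:V(G)\to\mathbb{Z}_{>0}$; it is proper if adjacent vertices get different colors. A vertex $u$ is fixed by $\varphi$ if every automorphism $f$ of $G$ with $\varphi(f(v))=\varphi(v)$ for all $v$ satisfies $f(u)=u$. A coloring is distinguishing if it fixes every vertex, i.e. the only color-preserving automorphism is the identity. In a breadth-first spanning tree $T$ rooted at $w$, $\sigma$ is the order in which vertices are visited by the breadth-first search (so $w$ is first and parents precede children); each vertex $v\neq w$ has a parent in $T$, and the siblings of $v$ are the other children of its parent. For $v\in V(G)$, $\sigma_v$ denotes the set of vertices preceding $v$ in $\sigma$; a prefix $\sigma'$ of $\sigma$ is identified with its set of vertices. Greedy coloring with respect to $\sigma$ and $\varphi'$: extend $\varphi'$ to $\varphi$ by coloring each $v\in\sigma\setminus\sigma'$ in the order $\sigma$ as follows. (i) If $v$ has a neighbor in $\sigma_v$ other than its parent, then $\varphi(v)$ is the smallest positive integer not used on $N(v)\cap\sigma_v$. (ii) Otherwise, $\varphi(v)$ is the smallest positive integer not used on $\sigma_v\cap S_v$, where $S_v$ is the set consisting of the parent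 and the siblings of $v$. *)

theory Defs
  imports Main
begin

definition sgraph :: "'a set \<Rightarrow> ('a \<Rightarrow> 'a \<Rightarrow> bool) \<Rightarrow> bool" where
  "sgraph V E \<longleftrightarrow> finite V \<and> (\<forall>x y. E x y \<longrightarrow> x \<in> V \<and> y \<in> V)
     \<and> (\<forall>x y. E x y \<longrightarrow> E y x) \<and> (\<forall>x. \<not> E x x)"

definition connected_graph :: "'a set \<Rightarrow> ('a \<Rightarrow> 'a \<Rightarrow> bool) \<Rightarrow> bool" where
  "connected_graph V E \<longleftrightarrow> V \<noteq> {} \<and> (\<forall>u\<in>V. \<forall>v\<in>V. E\<^sup>*\<^sup>* u v)"

definition is_cycle :: "('a \<Rightarrow> 'a \<Rightarrow> bool) \<Rightarrow> 'a list \<Rightarrow> bool" where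
  "is_cycle E cs \<longleftrightarrow> length cs \<ge> 3 \<and> distinct cs
     \<and> (\<forall>i. Suc i < length cs \<longrightarrow> E (cs ! i) (cs ! Suc i))
     \<and> E (last cs) (hd cs)"

definition girth_at_least :: "'a set \<Rightarrow> ('a \<Rightarrow> 'a \<Rightarrow> bool) \<Rightarrow> nat \<Rightarrow> bool" where
  "girth_at_least V E g \<longleftrightarrow> (\<forall>cs. set cs \<subseteq> V \<and> is_cycle E cs \<longrightarrow> length cs \<ge> g)"

definition pos :: "'a list \<Rightarrow> 'a \<Rightarrow> nat" where
  "pos \<sigma> v = (LEAST i. i < length \<sigma> \<and> \<sigma> ! i = v)"

definition before :: "'a list \<Rightarrow> 'a \<Rightarrow> 'a set" where
  "before \<sigma> v = set (take (pos \<sigma> v) \<sigma>)"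

(* \<sigma> is a breadth-first search order of G rooted at w, and par is the parent map of the
   corresponding BFS spanning tree T: each non-root vertex's parent is its first neighbour
   in \<sigma> (and precedes it), and vertices appear grouped in the order of their parents
   (children of earlier-visited vertices are visited earlier). *)
definition bfs_tree :: "'a set \<Rightarrow> ('a \<Rightarrow> 'a \<Rightarrow> bool) \<Rightarrow> 'a \<Rightarrow> 'a list \<Rightarrow> ('a \<Rightarrow> 'a) \<Rightarrow> bool" where
  "bfs_tree V E w \<sigma> par \<longleftrightarrow>
     distinct \<sigma> \<and> set \<sigma> = V \<and> \<sigma> \<noteq> [] \<and> hd \<sigma> = w
     \<and> (\<forall>v\<in>V. v \<noteq> w \<longrightarrow>
          E v (par v) \<and> par v \<in> before \<sigma> v
          \<and> (\<forall>u\<in>before \<sigma> v. E v u \<longrightarrow> pos \<sigma> (par v) \<le> pos \<sigma> u))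
     \<and> (\<forall>u\<in>V. \<forall>v\<in>V. u \<noteq> w \<longrightarrow> v \<noteq> w \<longrightarrow>
          pos \<sigma> (par u) < pos \<sigma> (par v) \<longrightarrow> pos \<sigma> u < pos \<sigma> v)"

definition proper_on :: "'a set \<Rightarrow> ('a \<Rightarrow> 'a \<Rightarrow> bool) \<Rightarrow> ('a \<Rightarrow> nat) \<Rightarrow> bool" where
  "proper_on S E \<phi> \<longleftrightarrow> (\<forall>u\<in>S. \<forall>v\<in>S. E u v \<longrightarrow> \<phi> u \<noteq> \<phi> v)"

definition coloring_on :: "'a set \<Rightarrow> ('a \<Rightarrow> nat) \<Rightarrow> bool" where
  "coloring_on S \<phi> \<longleftrightarrow> (\<forall>v\<in>S. \<phi> v > 0)"

definition automorphism :: "'a set \<Rightarrow> ('a \<Rightarrow> 'a \<Rightarrow> bool) \<Rightarrow> ('a \<Rightarrow> 'a) \<Rightarrow> bool" where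
  "automorphism V E f \<longleftrightarrow> bij_betw f V V \<and> (\<forall>x\<in>V. \<forall>y\<in>V. E (f x) (f y) \<longleftrightarrow> E x y)"

definition fixes_vertex :: "'a set \<Rightarrow> ('a \<Rightarrow> 'a \<Rightarrow> bool) \<Rightarrow> ('a \<Rightarrow> nat) \<Rightarrow> 'a \<Rightarrow> bool" where
  "fixes_vertex V E \<phi> u \<longleftrightarrow>
     (\<forall>f. automorphism V E f \<and> (\<forall>v\<in>V. \<phi> (f v) = \<phi> v) \<longrightarrow> f u = u)"

definition distinguishing :: "'a set \<Rightarrow> ('a \<Rightarrow> 'a \<Rightarrow> bool) \<Rightarrow> ('a \<Rightarrow> nat) \<Rightarrow> bool" where
  "distinguishing V E \<phi> \<longleftrightarrow> (\<forall>u\<in>V. fixes_vertex V E \<phi> u)"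

definition mex :: "nat set \<Rightarrow> nat" where
  "mex A = (LEAST c. c > 0 \<and> c \<notin> A)"

definition greedy_coloring ::
  "('a \<Rightarrow> 'a \<Rightarrow> bool) \<Rightarrow> 'a \<Rightarrow> 'a list \<Rightarrow> ('a \<Rightarrow> 'a) \<Rightarrow> nat \<Rightarrow> ('a \<Rightarrow> nat) \<Rightarrow> ('a \<Rightarrow> nat) \<Rightarrow> bool" where
  "greedy_coloring E w \<sigma> par k \<phi>' \<phi> \<longleftrightarrow>
     (\<forall>v\<in>set (take k \<sigma>). \<phi> v = \<phi>' v)
     \<and> (\<forall>v\<in>set (drop k \<sigma>).
          (if (\<exists>u\<in>before \<sigma> v. E v u \<and> u \<noteq> par v)
           then \<phi> v = mex (\<phi> ` {u\<in>before \<sigma> v. E v u})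
           else \<phi> v = mex (\<phi> ` (before \<sigma> v \<inter>
                   ({par v} \<union> {u\<in>set \<sigma>. u \<noteq> w \<and> u \<noteq> v \<and> par u = par v})))))"

end

theory Submission imports Defs begin

lemma pos_nth: "distinct s \<Longrightarrow> i < length s \<Longrightarrow> pos s (s ! i) = i"
  unfolding pos_def
  by (rule Least_equality) (auto simp: nth_eq_iff_index_eq)

lemma pos_in: "distinct s \<Longrightarrow> v \<in> set s \<Longrightarrow> pos s v < length s \<and> s ! pos s v = v"
proof -
  assume d: "distinct s" and "v \<in> set s"
  then obtain i where i: "i < length s" "s ! i = v" by (auto simp: in_set_conv_nth)
  then have "pos s v = i" using pos_nth[OF d i(1)] by simp
  then show ?thesis using i by simp
qed

lemma pos_inj: "distinct s \<Longrightarrow> u \<in> set s \<Longrightarrow> v \<in> set s \<Longrightarrow> pos s u = pos s v \<Longrightarrow> u = v"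
proof -
  assume d: "distinct s" and u: "u \<in> set s" and v: "v \<in> set s" and e: "pos s u = pos s v"
  have "u = s ! pos s u" using pos_in[OF d u] by simp
  also have "\<dots> = s ! pos s v" using e by simp
  also have "\<dots> = v" using pos_in[OF d v] by simp
  finally show ?thesis .
qed

lemma in_take_iff: "distinct s \<Longrightarrow> u \<in> set (take n s) \<longleftrightarrow> u \<in> set s \<and> pos s u < n"
proof
  assume d: "distinct s" and "u \<in> set (take n s)"
  then obtain i where i: "i < length (take n s)" "take n s ! i = u" by (auto simp: in_set_conv_nth)
  then have "s ! i = u" "i < length s" "i < n" by auto
  then show "u \<in> set s \<and> pos s u < n" using pos_nth[OF d] by auto
next
  assume d: "distinct s" and "u \<in> set s \<and> pos s u < n"
  then have i: "pos s u < length s" "s ! pos s u = u" "pos s u < n" using pos_in[OF d, of u] by auto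
  then have "take n s ! pos s u = u" "pos s u < length (take n s)" by auto
  then show "u \<in> set (take n s)" by (metis nth_mem)
qed

lemma in_drop_iff: "distinct s \<Longrightarrow> u \<in> set (drop n s) \<longleftrightarrow> u \<in> set s \<and> \<not> pos s u < n"
proof -
  assume d: "distinct s"
  have e: "s = take n s @ drop n s" by simp
  have dis: "set (take n s) \<inter> set (drop n s) = {}" using d e by (metis distinct_append)
  have un: "set s = set (take n s) \<union> set (drop n s)" using e by (metis set_append)
  have "u \<in> set (drop n s) \<longleftrightarrow> u \<in> set s \<and> u \<notin> set (take n s)" using dis un by blast
  then show ?thesis using in_take_iff[OF d] by blast
qed

lemma before_iff: "distinct s \<Longrightarrow> u \<in> before s v \<longleftrightarrow> u \<in> set s \<and> pos s u < pos s v"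
  unfolding before_def by (rule in_take_iff)

lemma mex: "finite A \<Longrightarrow> mex A > 0 \<and> mex A \<notin> A"
proof -
  assume "finite A"
  then have "\<exists>c. c > 0 \<and> c \<notin> A"
    by (metis Max_ge finite_insert insertCI lessI less_le_trans not_le zero_less_Suc)
  then show ?thesis unfolding mex_def by (rule LeastI_ex)
qed

lemma bfsD1: "bfs_tree V E w s par \<Longrightarrow> distinct s \<and> set s = V \<and> s \<noteq> [] \<and> hd s = w"
  unfolding bfs_tree_def by simp
lemma bfsD2: "bfs_tree V E w s par \<Longrightarrow> v \<in> V \<Longrightarrow> v \<noteq> w \<Longrightarrow>
   E v (par v) \<and> par v \<in> before s v \<and> (\<forall>u\<in>before s v. E v u \<longrightarrow> pos s (par v) \<le> pos s u)"
  unfolding bfs_tree_def by simp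
lemma bfsD3: "bfs_tree V E w s par \<Longrightarrow> u \<in> V \<Longrightarrow> v \<in> V \<Longrightarrow> u \<noteq> w \<Longrightarrow> v \<noteq> w \<Longrightarrow>
   pos s (par u) < pos s (par v) \<Longrightarrow> pos s u < pos s v"
  unfolding bfs_tree_def by simp
lemma sgD: "sgraph V E \<Longrightarrow> (E x y \<longrightarrow> E y x) \<and> (E x y \<longrightarrow> x \<in> V \<and> y \<in> V) \<and> \<not> E x x"
  unfolding sgraph_def by simp

lemma cyc3: "girth_at_least V E 5 \<Longrightarrow> a \<in> V \<Longrightarrow> b \<in> V \<Longrightarrow> c \<in> V \<Longrightarrow> E a b \<Longrightarrow> E b c \<Longrightarrow> E c a \<Longrightarrow> distinct [a,b,c] \<Longrightarrow> False"
proof -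
  assume g: "girth_at_least V E 5" and h: "a \<in> V" "b \<in> V" "c \<in> V" "E a b" "E b c" "E c a" "distinct [a,b,c]"
  have "is_cycle E [a,b,c]" unfolding is_cycle_def using h by (simp add: All_less_Suc)
  moreover have "set [a,b,c] \<subseteq> V" using h by simp
  ultimately have "length [a,b,c] \<ge> 5" using g unfolding girth_at_least_def by blast
  then show False by simp
qed
lemma cyc4: "girth_at_least V E 5 \<Longrightarrow> a \<in> V \<Longrightarrow> b \<in> V \<Longrightarrow> c \<in> V \<Longrightarrow> e \<in> V \<Longrightarrow> E a b \<Longrightarrow> E b c \<Longrightarrow> E c e \<Longrightarrow> E e a \<Longrightarrow> distinct [a,b,c,e] \<Longrightarrow> False"
proof -
  assume g: "girth_at_least V E 5" and h: "a \<in> V" "b \<in> V" "c \<in> V" "e \<in> V" "E a b" "E b c" "E c e" "E e a" "distinct [a,b,c,e]"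
  have "is_cycle E [a,b,c,e]" unfolding is_cycle_def using h by (simp add: All_less_Suc)
  moreover have "set [a,b,c,e] \<subseteq> V" using h by simp
  ultimately have "length [a,b,c,e] \<ge> 5" using g unfolding girth_at_least_def by blast
  then show False by simp
qed

theorem lemma2:
  fixes V :: "'a set" and E :: "'a \<Rightarrow> 'a \<Rightarrow> bool" and w :: 'a
    and \<sigma> :: "'a list" and par :: "'a \<Rightarrow> 'a" and k :: nat
    and \<phi>' \<phi> :: "'a \<Rightarrow> nat"
  assumes "sgraph V E" and "connected_graph V E" and "girth_at_least V E 5"
    and "w \<in> V" and "bfs_tree V E w \<sigma> par"
    and "1 \<le> k" and "k \<le> length \<sigma>"
    and "coloring_on (set (take k \<sigma>)) \<phi>'" and "proper_on (set (take k \<sigma>)) E \<phi>'"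
    and "greedy_coloring E w \<sigma> par k \<phi>' \<phi>"
    and "\<forall>u\<in>set (take k \<sigma>). fixes_vertex V E \<phi> u"
  shows "coloring_on V \<phi> \<and> proper_on V E \<phi> \<and> distinguishing V E \<phi>"
proof -
  have Esym: "\<And>x y. E x y \<Longrightarrow> E y x" and EV: "\<And>x y. E x y \<Longrightarrow> x \<in> V \<and> y \<in> V"
    and Eirr: "\<And>x. \<not> E x x" using sgD[OF assms(1)] by blast+
  have d: "distinct \<sigma>" and sV: "set \<sigma> = V" and hw: "hd \<sigma> = w" and ne: "\<sigma> \<noteq> []"
    using bfsD1[OF assms(5)] by blast+
  note B4 = bfsD2[OF assms(5)]
  note B5 = bfsD3[OF assms(5)]
  have pw: "pos \<sigma> w = 0" using pos_nth[OF d, of 0] hw ne by (simp add: hd_conv_nth)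
  have bef: "\<And>u v. u \<in> before \<sigma> v \<longleftrightarrow> u \<in> V \<and> pos \<sigma> u < pos \<sigma> v"
    using before_iff[OF d] sV by blast
  have tk: "\<And>u. u \<in> set (take k \<sigma>) \<longleftrightarrow> u \<in> V \<and> pos \<sigma> u < k"
    using in_take_iff[OF d] sV by blast
  have dk: "\<And>u. u \<in> set (drop k \<sigma>) \<longleftrightarrow> u \<in> V \<and> \<not> pos \<sigma> u < k"
    using in_drop_iff[OF d] sV by blast
  have pinj: "\<And>u v. u \<in> V \<Longrightarrow> v \<in> V \<Longrightarrow> pos \<sigma> u = pos \<sigma> v \<Longrightarrow> u = v"
    using pos_inj[OF d] sV by blast
  have gr1: "\<forall>v\<in>set (take k \<sigma>). \<phi> v = \<phi>' v"
    using assms(10) unfolding greedy_coloring_def by (rule conjunct1)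
  have gr2: "\<forall>v\<in>set (drop k \<sigma>).
          (if (\<exists>u\<in>before \<sigma> v. E v u \<and> u \<noteq> par v)
           then \<phi> v = mex (\<phi> ` {u\<in>before \<sigma> v. E v u})
           else \<phi> v = mex (\<phi> ` (before \<sigma> v \<inter>
                   ({par v} \<union> {u\<in>set \<sigma>. u \<noteq> w \<and> u \<noteq> v \<and> par u = par v}))))"
    using assms(10) unfolding greedy_coloring_def by (rule conjunct2)
  have g1: "\<And>v. v \<in> V \<Longrightarrow> pos \<sigma> v < k \<Longrightarrow> \<phi> v = \<phi>' v"
  proof -
    fix v assume "v \<in> V" "pos \<sigma> v < k"
    then have "v \<in> set (take k \<sigma>)" using tk by simp
    then show "\<phi> v = \<phi>' v" using gr1 by (rule bspec[rotated])
  qed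
  have fin: "\<And>v. finite (before \<sigma> v)" by (simp add: before_def)
  have gi: "\<And>v. v \<in> V \<Longrightarrow> \<not> pos \<sigma> v < k \<Longrightarrow> (\<exists>u\<in>before \<sigma> v. E v u \<and> u \<noteq> par v) \<Longrightarrow>
      \<phi> v = mex (\<phi> ` {u\<in>before \<sigma> v. E v u})"
  proof -
    fix v assume a: "v \<in> V" "\<not> pos \<sigma> v < k" "\<exists>u\<in>before \<sigma> v. E v u \<and> u \<noteq> par v"
    have "v \<in> set (drop k \<sigma>)" using dk a by simp
    then have "if (\<exists>u\<in>before \<sigma> v. E v u \<and> u \<noteq> par v)
           then \<phi> v = mex (\<phi> ` {u\<in>before \<sigma> v. E v u})
           else \<phi> v = mex (\<phi> ` (before \<sigma> v \<inter>
                   ({par v} \<union> {u\<in>set \<sigma>. u \<noteq> w \<and> u \<noteq> v \<and> par u = par v})))" by (rule bspec[OF gr2])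
    then show "\<phi> v = mex (\<phi> ` {u\<in>before \<sigma> v. E v u})" using a(3) by (simp only: if_P)
  qed
  have gii: "\<And>v. v \<in> V \<Longrightarrow> \<not> pos \<sigma> v < k \<Longrightarrow> \<not> (\<exists>u\<in>before \<sigma> v. E v u \<and> u \<noteq> par v) \<Longrightarrow>
      \<phi> v = mex (\<phi> ` (before \<sigma> v \<inter>
                   ({par v} \<union> {u\<in>set \<sigma>. u \<noteq> w \<and> u \<noteq> v \<and> par u = par v})))"
  proof -
    fix v assume a: "v \<in> V" "\<not> pos \<sigma> v < k" "\<not> (\<exists>u\<in>before \<sigma> v. E v u \<and> u \<noteq> par v)"
    have "v \<in> set (drop k \<sigma>)" using dk a by simp
    then have "if (\<exists>u\<in>before \<sigma> v. E v u \<and> u \<noteq> par v)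
           then \<phi> v = mex (\<phi> ` {u\<in>before \<sigma> v. E v u})
           else \<phi> v = mex (\<phi> ` (before \<sigma> v \<inter>
                   ({par v} \<union> {u\<in>set \<sigma>. u \<noteq> w \<and> u \<noteq> v \<and> par u = par v})))" by (rule bspec[OF gr2])
    then show "\<phi> v = mex (\<phi> ` (before \<sigma> v \<inter>
                   ({par v} \<union> {u\<in>set \<sigma>. u \<noteq> w \<and> u \<noteq> v \<and> par u = par v})))" using a(3) by (simp only: if_not_P if_False)
  qed
  have nw: "\<And>v. \<not> pos \<sigma> v < k \<Longrightarrow> v \<noteq> w" using pw assms(6) by auto
  have col: "coloring_on V \<phi>"
    unfolding coloring_on_def
  proof
    fix v assume v: "v \<in> V"
    show "\<phi> v > 0"
    proof (cases "pos \<sigma> v < k")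
      case True then show ?thesis using g1 v assms(8) tk unfolding coloring_on_def by auto
    next
      case False
      show ?thesis
      proof (cases "\<exists>u\<in>before \<sigma> v. E v u \<and> u \<noteq> par v")
        case True then show ?thesis using gi[OF v False True] mex fin by simp
      next
        case c: False then show ?thesis using gii[OF v False c] mex fin by simp
      qed
    qed
  qed
  have pr1: "\<phi> u \<noteq> \<phi> v" if uv: "u \<in> V" "v \<in> V" "E u v" "pos \<sigma> u < pos \<sigma> v" for u v
  proof (cases "pos \<sigma> v < k")
    case True
    then have "u \<in> set (take k \<sigma>)" "v \<in> set (take k \<sigma>)" using tk uv by auto
    then show ?thesis using g1 uv assms(9) True unfolding proper_on_def by auto
  next
    case False
    have ub: "u \<in> before \<sigma> v" using bef uv by auto
    show ?thesis
    proof (cases "\<exists>u\<in>before \<sigma> v. E v u \<and> u \<noteq> par v")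
      case True
      have "\<phi> u \<in> \<phi> ` {u\<in>before \<sigma> v. E v u}" using ub uv Esym by auto
      moreover have "mex (\<phi> ` {u\<in>before \<sigma> v. E v u}) \<notin> \<phi> ` {u\<in>before \<sigma> v. E v u}"
        using mex fin by simp
      ultimately show ?thesis using gi[OF uv(2) False True] by metis
    next
      case c: False
      then have "u = par v" using ub uv Esym by auto
      then have "\<phi> u \<in> \<phi> ` (before \<sigma> v \<inter>
                   ({par v} \<union> {u\<in>set \<sigma>. u \<noteq> w \<and> u \<noteq> v \<and> par u = par v}))" using ub by auto
      moreover have "mex (\<phi> ` (before \<sigma> v \<inter>
                   ({par v} \<union> {u\<in>set \<sigma>. u \<noteq> w \<and> u \<noteq> v \<and> par u = par v}))) \<notin> \<phi> ` (before \<sigma> v \<inter>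
                   ({par v} \<union> {u\<in>set \<sigma>. u \<noteq> w \<and> u \<noteq> v \<and> par u = par v}))"
        using mex fin by simp
      ultimately show ?thesis using gii[OF uv(2) False c] by metis
    qed
  qed
  have prp: "proper_on V E \<phi>"
    unfolding proper_on_def
  proof (intro ballI impI)
    fix u v assume uv: "u \<in> V" "v \<in> V" "E u v"
    then have "u \<noteq> v" using Eirr by auto
    then have "pos \<sigma> u \<noteq> pos \<sigma> v" using pinj uv by auto
    then consider "pos \<sigma> u < pos \<sigma> v" | "pos \<sigma> v < pos \<sigma> u" by linarith
    then show "\<phi> u \<noteq> \<phi> v"
    proof cases
      case 1 then show ?thesis using pr1[OF uv 1] by simp
    next
      case 2 then show ?thesis using pr1[OF uv(2) uv(1) Esym[OF uv(3)] 2] by simp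
    qed
  qed
  note cyc = cyc3[OF assms(3)]
  note cyc4 = cyc4[OF assms(3)]
  have dist: "distinguishing V E \<phi>"
    unfolding distinguishing_def fixes_vertex_def
  proof (intro ballI allI impI)
    fix u f assume u: "u \<in> V" and fa: "automorphism V E f \<and> (\<forall>v\<in>V. \<phi> (f v) = \<phi> v)"
    have bij: "bij_betw f V V" and fE: "\<And>x y. x \<in> V \<Longrightarrow> y \<in> V \<Longrightarrow> E (f x) (f y) \<longleftrightarrow> E x y"
      and fc: "\<And>v. v \<in> V \<Longrightarrow> \<phi> (f v) = \<phi> v"
      using fa unfolding automorphism_def by auto
    have fV: "\<And>x. x \<in> V \<Longrightarrow> f x \<in> V" using bij bij_betwE by blast
    have finj: "\<And>x y. x \<in> V \<Longrightarrow> y \<in> V \<Longrightarrow> f x = f y \<Longrightarrow> x = y"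
      using bij unfolding bij_betw_def inj_on_def by blast
    have "\<forall>v. v \<in> V \<longrightarrow> pos \<sigma> v = n \<longrightarrow> f v = v" for n
    proof (induction n rule: less_induct)
      case (less n)
      show ?case
      proof (intro allI impI)
        fix v assume v: "v \<in> V" and pn: "pos \<sigma> v = n"
        have IH: "\<And>y. y \<in> V \<Longrightarrow> pos \<sigma> y < pos \<sigma> v \<Longrightarrow> f y = y" using less pn by blast
        show "f v = v"
        proof (cases "pos \<sigma> v < k")
          case True
          then show ?thesis using assms(11) tk v fa unfolding fixes_vertex_def by blast
        next
          case nk: False
          have vw: "v \<noteq> w" using nw nk .
          define p where "p = par v"
          have vp: "E v p" and pb: "p \<in> before \<sigma> v" using B4[OF v vw] p_def by auto
          have pV: "p \<in> V" and ppv: "pos \<sigma> p < pos \<sigma> v" using pb bef by auto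
          have fp: "f p = p" using IH pV ppv by blast
          define x where "x = f v"
          have xV: "x \<in> V" using fV v x_def by auto
          have xp: "E x p" using fE[OF v pV] vp fp x_def by simp
          show ?thesis
          proof (rule ccontr)
            assume xv': "f v \<noteq> v"
            then have xv: "x \<noteq> v" using x_def by simp
            have xnp: "x \<noteq> p" using finj[OF v pV] fp x_def vp Eirr by auto
            show False
            proof (cases "\<exists>u\<in>before \<sigma> v. E v u \<and> u \<noteq> par v")
              case True
              then obtain y where yb: "y \<in> before \<sigma> v" and vy: "E v y" and yp: "y \<noteq> p"
                using p_def by auto
              have yV: "y \<in> V" and pyv: "pos \<sigma> y < pos \<sigma> v" using yb bef by auto
              have fy: "f y = y" using IH yV pyv by blast
              have xy: "E x y" using fE[OF v yV] vy fy x_def by simp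
              have xny: "x \<noteq> y" using finj[OF v yV] fy x_def vy Eirr by auto
              have "v \<noteq> p" "v \<noteq> y" using vp vy Eirr by auto
              then show False
                using cyc4[OF v pV xV yV vp Esym[OF xp] xy Esym[OF vy]] xv xnp xny yp by auto
            next
              case c2: False
              have "\<not> pos \<sigma> x < pos \<sigma> v"
              proof
                assume "pos \<sigma> x < pos \<sigma> v"
                then have "f x = x" using IH xV by blast
                then show False using finj[OF v xV] x_def xv by auto
              qed
              moreover have "pos \<sigma> x \<noteq> pos \<sigma> v" using pinj xV v xv by auto
              ultimately have pvx: "pos \<sigma> v < pos \<sigma> x" by auto
              have xw: "x \<noteq> w" using pvx pw by auto
              have pbx: "p \<in> before \<sigma> x" using bef pV ppv pvx by auto
              have "pos \<sigma> (par x) \<le> pos \<sigma> p" using B4[OF xV xw] pbx xp by auto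
              moreover have "\<not> pos \<sigma> (par x) < pos \<sigma> p"
                using B5[OF xV v xw vw] p_def pvx by auto
              ultimately have "pos \<sigma> (par x) = pos \<sigma> p" by auto
              moreover have "par x \<in> V" using B4[OF xV xw] bef by auto
              ultimately have parx: "par x = p" using pinj pV by auto
              have nkx: "\<not> pos \<sigma> x < k" using nk pvx by auto
              have col_eq: "\<phi> x = \<phi> v" using fc v x_def by simp
              show False
              proof (cases "\<exists>u\<in>before \<sigma> x. E x u \<and> u \<noteq> par x")
                case True
                then obtain y where yb: "y \<in> before \<sigma> x" and xy: "E x y" and yp: "y \<noteq> p"
                  using parx by auto
                have yV: "y \<in> V" and pyx: "pos \<sigma> y < pos \<sigma> x" using yb bef by auto
                have "pos \<sigma> y < pos \<sigma> v"
                proof (cases "y = w")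
                  case True then show ?thesis using pw ppv by auto
                next
                  case yw: False
                  consider "pos \<sigma> (par y) < pos \<sigma> p" | "pos \<sigma> (par y) = pos \<sigma> p"
                    | "pos \<sigma> (par y) > pos \<sigma> p" by linarith
                  then show ?thesis
                  proof cases
                    case 1 then show ?thesis using B5[OF yV v yw vw] p_def by auto
                  next
                    case 2
                    have "par y \<in> V" using B4[OF yV yw] bef by auto
                    then have pary: "par y = p" using pinj pV 2 by auto
                    have yp': "E y p" using B4[OF yV yw] pary by auto
                    have "x \<noteq> y" using xy Eirr by auto
                    then show ?thesis using cyc[OF pV xV yV Esym[OF xp] xy yp'] xnp yp by auto
                  next
                    case 3 then have "pos \<sigma> x < pos \<sigma> y" using B5[OF xV yV xw yw] parx by auto
                    then show ?thesis using pyx by auto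
                  qed
                qed
                then have fy: "f y = y" using IH yV by blast
                have "E v y" using fE[OF v yV] xy fy x_def by simp
                moreover have "y \<in> before \<sigma> v" using bef yV \<open>pos \<sigma> y < pos \<sigma> v\<close> by auto
                ultimately show False using c2 yp p_def by auto
              next
                case c3: False
                have "v \<in> before \<sigma> x \<inter>
                   ({par x} \<union> {u\<in>set \<sigma>. u \<noteq> w \<and> u \<noteq> x \<and> par u = par x})"
                  using bef v pvx sV vw xv parx p_def by auto
                then have "\<phi> v \<in> \<phi> ` (before \<sigma> x \<inter>
                   ({par x} \<union> {u\<in>set \<sigma>. u \<noteq> w \<and> u \<noteq> x \<and> par u = par x}))" by blast
                moreover have "mex (\<phi> ` (before \<sigma> x \<inter>
                   ({par x} \<union> {u\<in>set \<sigma>. u \<noteq> w \<and> u \<noteq> x \<and> par u = par x}))) \<notin> \<phi> ` (before \<sigma> x \<inter>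
                   ({par x} \<union> {u\<in>set \<sigma>. u \<noteq> w \<and> u \<noteq> x \<and> par u = par x}))"
                  using mex fin by simp
                ultimately show False using gii[OF xV nkx c3] col_eq by metis
              qed
            qed
          qed
        qed
      qed
    qed
    then show "f u = u" using u by blast
  qed
  show ?thesis using col prp dist by blast
qed

end
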